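(* Let $G$ be a game and $\epsilon\ge 0$. The negotiation function $\mathrm{nego}$ of $G$ has a least $\epsilon$-fixed point (for the pointwise order on requirements).
   Context: A game is a tuple $G=(\Pi,V,(V_i)_{i\in\Pi},E,\mu)$ where $\Pi$ is a finite set of players, $(V,E)$ is a finite directed graph in which every vertex has at least one outgoing edge, $(V_i)_{i\in\Pi}$ is a partition of $V$, and $\mu:V^\omega\to\mathbb{R}^\Pi$ is the outcome function. Plays, histories, strategies, strategy profiles, compatibility, $\langle\bar\sigma\rangle_v$ (the play from $v$ generated by a complete profile $\bar\sigma$) and $\bar\sigma_{\|hw}$ (the profile $\sigma_{j\|hw}(h')=\sigma_j(hh')$) are as usual in turn-based games on graphs; $-i$ denotes $\Pi\setminus\{i\}$. A requirement is a map $\lambda:V\to\mathbb{R}\cup\{\pm\infty\}$; requirements are ordered pointwise. A play $\rho$ is $\lambda$-consistent if for every $i\in\Pi$ and every $n$ with $\rho_n\in V_i$, $\mu_i(\rho_n\rho_{n+1}\cdots)\ge\lambda(\rho_n)$. For a player $i$ and vertex $v$, $\lambda\mathrm{Rat}_i(v)$ is the set of profiles $\bar\sigma_{-i}$ in $G_{\|v}$ for which there exists a strategy $\sigma_i$ such that for every history $hw$ from $v$ compatible with $\bar\sigma_{-i}$, the play $\langle\bar\sigma_{\|hw}\rangle_w$ (with $\bar\sigma=(\bar\sigma_{-i},\sigma_i)$) is $\lambda$-consistent. The negotiation function is defined, for $i\in\Pi$ and $v\in V_i$, by $\mathrm{nego}(\lambda)(v)=\inf_{\bar\sigma_{-i}\in\lambda\mathrm{Rat}_i(v)}\sup_{\sigma_i}\mu_i(\langle\bar\sigma_{-i},\sigma_i\rangle_v)$,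 with $\inf\emptyset=+\infty$. For $\epsilon\ge0$, a requirement $\lambda$ is an $\epsilon$-fixed point of $\mathrm{nego}$ if for every $v\in V$, $\lambda(v)-\epsilon\le\mathrm{nego}(\lambda)(v)\le\lambda(v)+\epsilon$ (with $\pm\infty\pm\epsilon=\pm\infty$; in particular the constant requirement $+\infty$ is an $\epsilon$-fixed point). *)

theory Defs
  imports Main "HOL-Library.Extended_Real"
begin

(* A game: players Pi, vertices V, owner function (encodes the partition (V_i)),
   edges E, outcome mu :: play => player => real. *)
definition game :: "'p set \<Rightarrow> 'v set \<Rightarrow> ('v \<Rightarrow> 'p) \<Rightarrow> ('v \<times> 'v) set \<Rightarrow> bool" where
  "game Pi V own E \<longleftrightarrow> finite Pi \<and> finite V \<and> E \<subseteq> V \<times> V \<and>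
     (\<forall>v\<in>V. \<exists>w. (v, w) \<in> E) \<and> (\<forall>v\<in>V. own v \<in> Pi)"

definition is_hist :: "'v set \<Rightarrow> ('v \<times> 'v) set \<Rightarrow> 'v list \<Rightarrow> bool" where
  "is_hist V E h \<longleftrightarrow> h \<noteq> [] \<and> set h \<subseteq> V \<and>
     (\<forall>k. Suc k < length h \<longrightarrow> (h ! k, h ! Suc k) \<in> E)"

definition is_strat :: "'v set \<Rightarrow> ('v \<times> 'v) set \<Rightarrow> ('v \<Rightarrow> 'p) \<Rightarrow> 'p \<Rightarrow> ('v list \<Rightarrow> 'v) \<Rightarrow> bool" where
  "is_strat V E own i \<sigma> \<longleftrightarrow>
     (\<forall>h. is_hist V E h \<and> own (last h) = i \<longrightarrow> (last h, \<sigma> h) \<in> E)"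

fun gen_hist :: "('v \<Rightarrow> 'p) \<Rightarrow> ('p \<Rightarrow> 'v list \<Rightarrow> 'v) \<Rightarrow> 'v \<Rightarrow> nat \<Rightarrow> 'v list" where
  "gen_hist own \<sigma>s v 0 = [v]"
| "gen_hist own \<sigma>s v (Suc n) =
     (let h = gen_hist own \<sigma>s v n in h @ [\<sigma>s (own (last h)) h])"

definition outcome_play :: "('v \<Rightarrow> 'p) \<Rightarrow> ('p \<Rightarrow> 'v list \<Rightarrow> 'v) \<Rightarrow> 'v \<Rightarrow> nat \<Rightarrow> 'v" where
  "outcome_play own \<sigma>s v n = last (gen_hist own \<sigma>s v n)"

(* sigma_{|hw}: sigma_j|hw (h') = sigma_j (h h'), h' starting at w *)
definition prof_shift :: "('p \<Rightarrow> 'v list \<Rightarrow> 'v) \<Rightarrow> 'v list \<Rightarrow> ('p \<Rightarrow> 'v list \<Rightarrow> 'v)" where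
  "prof_shift \<sigma>s hw = (\<lambda>j h'. \<sigma>s j (butlast hw @ h'))"

definition compat_minus :: "('v \<Rightarrow> 'p) \<Rightarrow> 'p \<Rightarrow> ('p \<Rightarrow> 'v list \<Rightarrow> 'v) \<Rightarrow> 'v list \<Rightarrow> bool" where
  "compat_minus own i \<sigma>s hw \<longleftrightarrow>
     (\<forall>k. Suc k < length hw \<and> own (hw ! k) \<noteq> i \<longrightarrow>
          hw ! Suc k = \<sigma>s (own (hw ! k)) (take (Suc k) hw))"

definition lam_consistent :: "('v \<Rightarrow> 'p) \<Rightarrow> ((nat \<Rightarrow> 'v) \<Rightarrow> 'p \<Rightarrow> real) \<Rightarrow> ('v \<Rightarrow> ereal) \<Rightarrow> (nat \<Rightarrow> 'v) \<Rightarrow> bool" where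
  "lam_consistent own mu lam \<rho> \<longleftrightarrow>
     (\<forall>n. lam (\<rho> n) \<le> ereal (mu (\<lambda>k. \<rho> (n + k)) (own (\<rho> n))))"

(* lambdaRat_i(v): profiles sigma_{-i} (represented as full profiles whose i-th
   component is irrelevant) *)
definition lamRat :: "'p set \<Rightarrow> 'v set \<Rightarrow> ('v \<Rightarrow> 'p) \<Rightarrow> ('v \<times> 'v) set \<Rightarrow>
    ((nat \<Rightarrow> 'v) \<Rightarrow> 'p \<Rightarrow> real) \<Rightarrow> ('v \<Rightarrow> ereal) \<Rightarrow> 'p \<Rightarrow> 'v \<Rightarrow> ('p \<Rightarrow> 'v list \<Rightarrow> 'v) set" where
  "lamRat Pi V own E mu lam i v =
     {\<sigma>s. (\<forall>j\<in>Pi. j \<noteq> i \<longrightarrow> is_strat V E own j (\<sigma>s j)) \<and>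
          (\<exists>\<sigma>i. is_strat V E own i \<sigma>i \<and>
             (\<forall>hw. is_hist V E hw \<and> hd hw = v \<and> compat_minus own i \<sigma>s hw \<longrightarrow>
                lam_consistent own mu lam
                  (outcome_play own (prof_shift (\<sigma>s(i := \<sigma>i)) hw) (last hw))))}"

definition nego :: "'p set \<Rightarrow> 'v set \<Rightarrow> ('v \<Rightarrow> 'p) \<Rightarrow> ('v \<times> 'v) set \<Rightarrow>
    ((nat \<Rightarrow> 'v) \<Rightarrow> 'p \<Rightarrow> real) \<Rightarrow> ('v \<Rightarrow> ereal) \<Rightarrow> 'v \<Rightarrow> ereal" where
  "nego Pi V own E mu lam v =
     (INF \<sigma>s \<in> lamRat Pi V own E mu lam (own v) v.
        SUP \<sigma>i \<in> {\<sigma>. is_strat V E own (own v) \<sigma>}.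
          ereal (mu (outcome_play own (\<sigma>s(own v := \<sigma>i)) v) (own v)))"

definition eps_fixed :: "'p set \<Rightarrow> 'v set \<Rightarrow> ('v \<Rightarrow> 'p) \<Rightarrow> ('v \<times> 'v) set \<Rightarrow>
    ((nat \<Rightarrow> 'v) \<Rightarrow> 'p \<Rightarrow> real) \<Rightarrow> real \<Rightarrow> ('v \<Rightarrow> ereal) \<Rightarrow> bool" where
  "eps_fixed Pi V own E mu eps lam \<longleftrightarrow>
     (\<forall>v\<in>V. lam v - ereal eps \<le> nego Pi V own E mu lam v \<and>
            nego Pi V own E mu lam v \<le> lam v + ereal eps)"

end

theory Submission
  imports Defs
begin

lemma cons_mono:
  assumes "\<And>x. lam x \<le> lam' x" "lam_consistent own mu lam' \<rho>"
  shows "lam_consistent own mu lam \<rho>"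
  using assms unfolding lam_consistent_def by (meson order_trans)

lemma rat_mono:
  assumes "\<And>x. lam x \<le> lam' x"
  shows "lamRat Pi V own E mu lam' i v \<subseteq> lamRat Pi V own E mu lam i v"
proof -
  have "\<And>\<rho>. lam_consistent own mu lam' \<rho> \<Longrightarrow> lam_consistent own mu lam \<rho>"
    by (rule cons_mono[where lam'=lam']) (use assms in auto)
  thus ?thesis unfolding lamRat_def by blast
qed

lemma nego_mono:
  assumes "\<And>x. lam x \<le> lam' x"
  shows "nego Pi V own E mu lam v \<le> nego Pi V own E mu lam' v"
  unfolding nego_def by (rule INF_superset_mono[OF rat_mono[OF assms]]) simp

lemma ereal_le_add_iff: "(a::ereal) - ereal e \<le> b \<longleftrightarrow> a \<le> b + ereal e"
  by (cases a; cases b) auto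

theorem mainTheorem2:
  fixes Pi :: "'p set" and V :: "'v set" and own :: "'v \<Rightarrow> 'p"
    and E :: "('v \<times> 'v) set" and mu :: "(nat \<Rightarrow> 'v) \<Rightarrow> 'p \<Rightarrow> real" and eps :: real
  assumes "game Pi V own E" and "eps \<ge> 0"
  shows "\<exists>lam. eps_fixed Pi V own E mu eps lam \<and>
           (\<forall>lam'. eps_fixed Pi V own E mu eps lam' \<longrightarrow> (\<forall>v\<in>V. lam v \<le> lam' v))"
proof -
  let ?N = "nego Pi V own E mu"
  define G where "G = {l. \<forall>v\<in>V. ?N l v \<le> l v + ereal eps}"
  define ls where "ls = (\<lambda>v. INF l\<in>G. l v)"
  have lsle: "\<And>l x. l \<in> G \<Longrightarrow> ls x \<le> l x" unfolding ls_def by (rule INF_lower)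
  have lsG: "ls \<in> G"
  proof -
    { fix v assume v: "v \<in> V"
      have "?N ls v - ereal eps \<le> (INF l\<in>G. l v)"
      proof (rule INF_greatest)
        fix l assume l: "l \<in> G"
        have "?N ls v \<le> ?N l v" by (rule nego_mono) (rule lsle[OF l])
        also have "\<dots> \<le> l v + ereal eps" using l v unfolding G_def by blast
        finally have "?N ls v \<le> l v + ereal eps" .
        thus "?N ls v - ereal eps \<le> l v" by (metis ereal_le_add_iff)
      qed
      hence "?N ls v - ereal eps \<le> ls v" by (simp only: ls_def)
      hence "?N ls v \<le> ls v + ereal eps" by (metis ereal_le_add_iff) }
    thus ?thesis unfolding G_def by blast
  qed
  have low: "ls v - ereal eps \<le> ?N ls v" if v: "v \<in> V" for v
  proof (rule ccontr)
    assume "\<not> ls v - ereal eps \<le> ?N ls v"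
    hence lt: "?N ls v < ls v - ereal eps" by simp
    define l' where "l' = ls(v := ?N ls v + ereal eps)"
    have l'lt: "?N ls v + ereal eps < ls v"
      using lt by (cases "?N ls v"; cases "ls v") auto
    have l'le: "\<And>x. l' x \<le> ls x" unfolding l'_def using l'lt by auto
    have "l' \<in> G"
    proof -
      { fix u assume u: "u \<in> V"
        have m: "?N l' u \<le> ?N ls u" by (rule nego_mono) (rule l'le)
        have "?N l' u \<le> l' u + ereal eps"
        proof (cases "u = v")
          case True
          have "?N ls v \<le> ?N ls v + ereal eps + ereal eps" using assms(2)
            by (cases "?N ls v") auto
          thus ?thesis using m True unfolding l'_def by (auto intro: order_trans)
        next
          case False
          thus ?thesis using m lsG u unfolding G_def l'_def by (auto intro: order_trans)
        qed }
      thus ?thesis unfolding G_def by blast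
    qed
    hence "ls v \<le> l' v" by (rule lsle)
    thus False using l'lt unfolding l'_def by simp
  qed
  have fix_ls: "eps_fixed Pi V own E mu eps ls"
    unfolding eps_fixed_def using low lsG unfolding G_def by blast
  moreover have "\<forall>lam'. eps_fixed Pi V own E mu eps lam' \<longrightarrow> (\<forall>v\<in>V. ls v \<le> lam' v)"
  proof (intro allI impI ballI)
    fix lam' v assume "eps_fixed Pi V own E mu eps lam'"
    hence "lam' \<in> G" unfolding eps_fixed_def G_def by blast
    thus "ls v \<le> lam' v" by (rule lsle)
  qed
  ultimately show ?thesis by blast
qed

end
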